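(* The value function $v$ is decreasing on $[0,\infty)$, satisfies $\frac{\beta u_0-1}{r}\le v(z)\le \frac{\beta u_0}{r}$ for all $z\ge 0$, and $\lim_{z\to\infty} v(z)=\frac{\beta u_0-1}{r}$.
   Context: Let $(\Omega,\mathcal F,\mathbb P)$ be a complete probability space carrying a standard Brownian motion $W=(W(t))_{t\ge0}$. Fix parameters $\mu\in\mathbb R$, $\sigma>0$, a maximal dividend rate $u_0>0$, a discount rate $r>0$, a weight $\beta>0$ and a critical drawdown level $d>0$. Let $\mathcal U$ be the set of adapted processes $U=(U(t))_{t\ge0}$ with $0\le U(t)\le u_0$ for all $t$ (admissible dividend strategies). For $U\in\mathcal U$ put $X^U(t)=\mu t+\sigma W(t)-\int_0^t U(s)\,ds$; for $z\ge0$ put $M_z^U(t)=\max\{z,\sup_{s\in[0,t]}X^U(s)\}$ and $\Delta_z^U(t)=M_z^U(t)-X^U(t)$ (the drawdown process with initial past maximum $z$). Define $v^U(z)=\mathbb E\big[\beta\int_0^\infty e^{-rt}U(t)\,dt-\int_0^\infty e^{-rt}\mathbf 1_{\{\Delta_z^U(t)>d\}}\,dt\big]$ and the value function $v(z)=\sup_{U\in\mathcal U}v^U(z)$, $z\ge0$. *)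

theory Defs
  imports "HOL-Probability.Probability"
begin

definition is_standard_BM :: "'a measure \<Rightarrow> (real \<Rightarrow> 'a \<Rightarrow> real) \<Rightarrow> bool" where
  "is_standard_BM M W \<longleftrightarrow>
     prob_space M \<and>
     (\<forall>t\<ge>0. W t \<in> borel_measurable M) \<and>
     (\<forall>\<omega>\<in>space M. W 0 \<omega> = 0 \<and> continuous_on {0..} (\<lambda>t. W t \<omega>)) \<and>
     (\<forall>ts. sorted ts \<and> distinct ts \<and> (\<forall>t\<in>set ts. 0 \<le> t) \<longrightarrow>
        prob_space.indep_vars M (\<lambda>_. borel) (\<lambda>i \<omega>. W (ts ! Suc i) \<omega> - W (ts ! i) \<omega>)
          {..<length ts - 1}) \<and>
     (\<forall>s t. 0 \<le> s \<and> s < t \<longrightarrow>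
        distributed M lborel (\<lambda>\<omega>. W t \<omega> - W s \<omega>) (normal_density 0 (sqrt (t - s))))"

definition nat_filtration :: "'a measure \<Rightarrow> (real \<Rightarrow> 'a \<Rightarrow> real) \<Rightarrow> real \<Rightarrow> 'a set set" where
  "nat_filtration M W t =
     sigma_sets (space M) (\<Union>s\<in>{0..t}. {W s -` B \<inter> space M | B. B \<in> sets borel})"

definition aug_filtration :: "'a measure \<Rightarrow> (real \<Rightarrow> 'a \<Rightarrow> real) \<Rightarrow> real \<Rightarrow> 'a set set" where
  "aug_filtration M W t =
     {S \<union> N | S N N'. S \<in> nat_filtration M W t \<and> N' \<in> null_sets M \<and> N \<subseteq> N'}"

definition admissible :: "'a measure \<Rightarrow> (real \<Rightarrow> 'a \<Rightarrow> real) \<Rightarrow> real \<Rightarrow> (real \<Rightarrow> 'a \<Rightarrow> real) set" where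
  "admissible M W u0 =
     {U. (\<forall>t\<ge>0. \<forall>B\<in>sets borel. U t -` B \<inter> space M \<in> aug_filtration M W t) \<and>
         (\<lambda>(t, \<omega>). U t \<omega>) \<in> borel_measurable (lborel \<Otimes>\<^sub>M M) \<and>
         (\<forall>t\<ge>0. \<forall>\<omega>\<in>space M. 0 \<le> U t \<omega> \<and> U t \<omega> \<le> u0)}"

definition surplus :: "real \<Rightarrow> real \<Rightarrow> (real \<Rightarrow> 'a \<Rightarrow> real) \<Rightarrow> (real \<Rightarrow> 'a \<Rightarrow> real) \<Rightarrow> real \<Rightarrow> 'a \<Rightarrow> real" where
  "surplus \<mu> \<sigma> W U t \<omega> = \<mu> * t + \<sigma> * W t \<omega> - (LINT s:{0..t}|lborel. U s \<omega>)"

definition run_max :: "real \<Rightarrow> real \<Rightarrow> (real \<Rightarrow> 'a \<Rightarrow> real) \<Rightarrow> (real \<Rightarrow> 'a \<Rightarrow> real) \<Rightarrow> real \<Rightarrow> real \<Rightarrow> 'a \<Rightarrow> real" where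
  "run_max \<mu> \<sigma> W U z t \<omega> = max z (SUP s\<in>{0..t}. surplus \<mu> \<sigma> W U s \<omega>)"

definition drawdown :: "real \<Rightarrow> real \<Rightarrow> (real \<Rightarrow> 'a \<Rightarrow> real) \<Rightarrow> (real \<Rightarrow> 'a \<Rightarrow> real) \<Rightarrow> real \<Rightarrow> real \<Rightarrow> 'a \<Rightarrow> real" where
  "drawdown \<mu> \<sigma> W U z t \<omega> = run_max \<mu> \<sigma> W U z t \<omega> - surplus \<mu> \<sigma> W U t \<omega>"

definition perf :: "'a measure \<Rightarrow> (real \<Rightarrow> 'a \<Rightarrow> real) \<Rightarrow> real \<Rightarrow> real \<Rightarrow> real \<Rightarrow> real \<Rightarrow> real \<Rightarrow>
    (real \<Rightarrow> 'a \<Rightarrow> real) \<Rightarrow> real \<Rightarrow> real" where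
  "perf M W \<mu> \<sigma> r \<beta> d U z =
     (\<integral>\<omega>. \<beta> * (LINT t:{0..}|lborel. exp (- r * t) * U t \<omega>)
           - (LINT t:{0..}|lborel. exp (- r * t) *
                (if drawdown \<mu> \<sigma> W U z t \<omega> > d then 1 else 0)) \<partial>M)"

definition value_fun :: "'a measure \<Rightarrow> (real \<Rightarrow> 'a \<Rightarrow> real) \<Rightarrow> real \<Rightarrow> real \<Rightarrow> real \<Rightarrow> real \<Rightarrow> real \<Rightarrow> real \<Rightarrow>
    real \<Rightarrow> real" where
  "value_fun M W \<mu> \<sigma> u0 r \<beta> d z = (SUP U\<in>admissible M W u0. perf M W \<mu> \<sigma> r \<beta> d U z)"

end

theory Submission
  imports Defs
begin


lemma exp_hbi:
  fixes r :: real assumes "r > 0"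
  shows "has_bochner_integral lborel (\<lambda>t. indicator {0..} t * exp (- r * t)) (1 / r)"
proof (rule has_bochner_integral_nn_integral)
  show "(\<integral>\<^sup>+ x. ennreal (indicator {0..} x * exp (- r * x)) \<partial>lborel) = ennreal (1 / r)"
    using nn_integral_has_integral_lebesgue[OF _ has_integral_exp_minus_to_infinity[OF assms, of 0]]
    by simp
qed (use assms in auto)

lemma caratheodory_meas:
  fixes f :: "real \<Rightarrow> 'a \<Rightarrow> real"
  assumes meas: "\<And>t. t \<ge> 0 \<Longrightarrow> f t \<in> borel_measurable M"
    and cont: "\<And>\<omega>. \<omega> \<in> space M \<Longrightarrow> continuous_on {0..} (\<lambda>t. f t \<omega>)"
  shows "(\<lambda>p. f (max 0 (fst p)) (snd p)) \<in> borel_measurable (lborel \<Otimes>\<^sub>M M)"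
proof (rule borel_measurable_LIMSEQ_real)
  define g where "g n p = f (max 0 (real_of_int \<lceil>real (Suc n) * fst p\<rceil> / real (Suc n))) (snd p)"
    for n :: nat and p :: "real \<times> 'a"
  show "g n \<in> borel_measurable (lborel \<Otimes>\<^sub>M M)" for n
  proof -
    have "(\<lambda>p. (\<lambda>i::int. \<lambda>p. f (max 0 (real_of_int i / real (Suc n))) (snd p)) (\<lceil>real (Suc n) * fst p\<rceil>) p)
       \<in> borel_measurable (lborel \<Otimes>\<^sub>M M)"
    proof (rule measurable_compose_countable[where f="\<lambda>i p. f (max 0 (real_of_int i / real (Suc n))) (snd p)" and g="\<lambda>p. \<lceil>real (Suc n) * fst p\<rceil>"])
      fix i :: int
      show "(\<lambda>p. f (max 0 (real_of_int i / real (Suc n))) (snd p)) \<in> borel_measurable (lborel \<Otimes>\<^sub>M M)"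
      proof -
        have [measurable]: "f (max 0 (real_of_int i / real (Suc n))) \<in> borel_measurable M"
          by (rule meas) simp
        show ?thesis by measurable
      qed
    next
      show "(\<lambda>p. \<lceil>real (Suc n) * fst p\<rceil>) \<in> lborel \<Otimes>\<^sub>M M \<rightarrow>\<^sub>M count_space UNIV"
        by measurable
    qed
    then show ?thesis by (simp add: g_def[abs_def])
  qed
  fix p :: "real \<times> 'a" assume p: "p \<in> space (lborel \<Otimes>\<^sub>M M)"
  then have sp: "snd p \<in> space M" by (auto simp: space_pair_measure)
  have lim1: "(\<lambda>n. real_of_int \<lceil>real (Suc n) * fst p\<rceil> / real (Suc n)) \<longlonglongrightarrow> fst p"
  proof (rule tendsto_sandwich[of "\<lambda>n. fst p" _ _ "\<lambda>n. fst p + 1 / real (Suc n)"])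
    show "\<forall>\<^sub>F n in sequentially. fst p \<le> real_of_int \<lceil>real (Suc n) * fst p\<rceil> / real (Suc n)"
      by (auto simp: field_simps intro!: always_eventually)
    show "\<forall>\<^sub>F n in sequentially. real_of_int \<lceil>real (Suc n) * fst p\<rceil> / real (Suc n) \<le> fst p + 1 / real (Suc n)"
    proof (intro always_eventually allI)
      fix n
      have "real_of_int \<lceil>real (Suc n) * fst p\<rceil> \<le> real (Suc n) * fst p + 1"
        by linarith
      then have "real_of_int \<lceil>real (Suc n) * fst p\<rceil> / real (Suc n) \<le> (real (Suc n) * fst p + 1) / real (Suc n)"
        by (rule divide_right_mono) simp
      also have "\<dots> = fst p + 1 / real (Suc n)"
        by (simp add: add_divide_distrib)
      finally show "real_of_int \<lceil>real (Suc n) * fst p\<rceil> / real (Suc n) \<le> fst p + 1 / real (Suc n)" .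
    qed
    show "(\<lambda>n. fst p + 1 / real (Suc n)) \<longlonglongrightarrow> fst p"
      using tendsto_add[OF tendsto_const LIMSEQ_inverse_real_of_nat] by (simp add: inverse_eq_divide)
  qed simp
  have lim2: "(\<lambda>n. max 0 (real_of_int \<lceil>real (Suc n) * fst p\<rceil> / real (Suc n))) \<longlonglongrightarrow> max 0 (fst p)"
    by (intro tendsto_intros lim1)
  show "(\<lambda>n. g n p) \<longlonglongrightarrow> f (max 0 (fst p)) (snd p)"
    unfolding g_def
    by (rule continuous_on_tendsto_compose[OF cont[OF sp] lim2]) auto
qed

lemma closure_rat_min:
  fixes T s :: real assumes "0 \<le> s" "s \<le> T"
  shows "s \<in> closure ((\<lambda>q. min q T) ` (\<rat> \<inter> {0..}))"
  unfolding closure_approachable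
proof (intro allI impI)
  fix e :: real assume e: "e > 0"
  show "\<exists>y\<in>(\<lambda>q. min q T) ` (\<rat> \<inter> {0..}). dist y s < e"
  proof (cases "s = T")
    case True
    obtain q where q: "q \<in> \<rat>" "T < q" "q < T + 1" using Rats_dense_in_real[of T "T+1"] by auto
    then have "min q T = T" "q \<in> \<rat> \<inter> {0..}" using assms by auto
    then have "T \<in> (\<lambda>q. min q T) ` (\<rat> \<inter> {0..})" by (metis image_eqI)
    then show ?thesis using True e by (intro bexI[of _ T]) auto
  next
    case False
    then have "s < min T (s + e)" using assms e by auto
    then obtain q where q: "q \<in> \<rat>" "s < q" "q < min T (s + e)" using Rats_dense_in_real by blast
    then have "min q T = q" "q \<in> \<rat> \<inter> {0..}" using assms by auto
    then have "q \<in> (\<lambda>q. min q T) ` (\<rat> \<inter> {0..})" by (metis image_eqI)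
    then show ?thesis using q by (intro bexI[of _ q]) (auto simp: dist_real_def)
  qed
qed

lemma sup_rat:
  fixes g :: "real \<Rightarrow> real" and T :: real
  assumes cont: "continuous_on {0..T} g" and T: "0 \<le> T"
  shows "bdd_above (g ` {0..T})"
    and "(SUP s\<in>{0..T}. g s) = (SUP q\<in>\<rat> \<inter> {0..}. g (min q T))"
proof -
  show bdd: "bdd_above (g ` {0..T})"
    by (intro bounded_imp_bdd_above compact_imp_bounded compact_continuous_image cont) simp
  define S where "S = (\<lambda>q. min q T) ` (\<rat> \<inter> {0..})"
  have S: "S \<subseteq> {0..T}" using T by (auto simp: S_def)
  have "(0::real) \<in> \<rat> \<inter> {0..}" by simp
  then have ne: "\<rat> \<inter> {0..} \<noteq> ({}::real set)" by blast
  have bdd2: "bdd_above ((\<lambda>q. g (min q T)) ` (\<rat> \<inter> {0..}))"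
    by (rule bdd_above_mono[OF bdd]) (use T in auto)
  have cl: "closure S \<subseteq> {0..T}" using S by (intro closure_minimal) auto
  have "g ` closure S \<subseteq> {..(SUP q\<in>\<rat> \<inter> {0..}. g (min q T))}"
  proof (rule image_closure_subset)
    show "continuous_on (closure S) g" using cont cl by (rule continuous_on_subset)
    show "g ` S \<subseteq> {..(SUP q\<in>\<rat> \<inter> {0..}. g (min q T))}"
      unfolding S_def using bdd2 by (auto intro!: cSUP_upper)
  qed simp
  moreover have "{0..T} \<subseteq> closure S" unfolding S_def using closure_rat_min by auto
  ultimately have le: "g s \<le> (SUP q\<in>\<rat> \<inter> {0..}. g (min q T))" if "s \<in> {0..T}" for s
    using that by blast
  show "(SUP s\<in>{0..T}. g s) = (SUP q\<in>\<rat> \<inter> {0..}. g (min q T))"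
  proof (rule antisym)
    show "(SUP s\<in>{0..T}. g s) \<le> (SUP q\<in>\<rat> \<inter> {0..}. g (min q T))"
      using T le by (intro cSUP_least) auto
    show "(SUP q\<in>\<rat> \<inter> {0..}. g (min q T)) \<le> (SUP s\<in>{0..T}. g s)"
      using ne T bdd by (intro cSUP_least cSUP_upper) auto
  qed
qed

lemma adm_meas:
  assumes "U \<in> admissible M W u0"
  shows "(\<lambda>p. U (fst p) (snd p)) \<in> borel_measurable (lborel \<Otimes>\<^sub>M M)"
  using assms unfolding admissible_def by (simp add: split_beta')

lemma adm_bnd:
  assumes "U \<in> admissible M W u0" "0 \<le> t" "\<omega> \<in> space M"
  shows "0 \<le> U t \<omega>" "U t \<omega> \<le> u0"
  using assms unfolding admissible_def by auto

lemma adm_slice: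
  assumes "U \<in> admissible M W u0" "\<omega> \<in> space M"
  shows "(\<lambda>s. U s \<omega>) \<in> borel_measurable lborel"
  using measurable_comp[OF measurable_Pair2'[OF assms(2)] adm_meas[OF assms(1)]]
  by (simp add: comp_def)

lemma adm_set_integrable:
  assumes "U \<in> admissible M W u0" "\<omega> \<in> space M" "A \<in> sets lborel" "emeasure lborel A < \<infinity>" "A \<subseteq> {0..}"
  shows "set_integrable lborel A (\<lambda>s. U s \<omega>)"
  unfolding set_integrable_def
proof (rule integrableI_bounded_set_indicator[where B=u0])
  show "(\<lambda>s. U s \<omega>) \<in> borel_measurable lborel" by (rule adm_slice[OF assms(1,2)])
  show "AE x in lborel. x \<in> A \<longrightarrow> norm (U x \<omega>) \<le> u0"
    using adm_bnd[OF assms(1) _ assms(2)] assms(5) by (auto intro!: AE_I2)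
qed (use assms in auto)

lemma I_nonneg:
  assumes "U \<in> admissible M W u0" "\<omega> \<in> space M"
  shows "0 \<le> (LINT s:{0..a}|lborel. U s \<omega>)"
  unfolding set_lebesgue_integral_def
  by (rule Bochner_Integration.integral_nonneg) (use adm_bnd[OF assms(1) _ assms(2)] in \<open>auto simp: indicator_def\<close>)

lemma I_lip:
  assumes "U \<in> admissible M W u0" "\<omega> \<in> space M" "0 \<le> a" "a \<le> b"
  shows "\<bar>(LINT s:{0..b}|lborel. U s \<omega>) - (LINT s:{0..a}|lborel. U s \<omega>)\<bar> \<le> u0 * (b - a)"
proof -
  have un: "{0..b} = {0..a} \<union> {a<..b}" using assms by auto
  have "(LINT s:{0..b}|lborel. U s \<omega>) = (LINT s:{0..a}|lborel. U s \<omega>) + (LINT s:{a<..b}|lborel. U s \<omega>)"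
    unfolding un using assms
    by (intro set_integral_Un adm_set_integrable[OF assms(1,2)]) auto
  moreover have "0 \<le> (LINT s:{a<..b}|lborel. U s \<omega>)"
    unfolding set_lebesgue_integral_def
    by (rule Bochner_Integration.integral_nonneg) (use adm_bnd[OF assms(1) _ assms(2)] assms in \<open>auto simp: indicator_def\<close>)
  moreover have "(LINT s:{a<..b}|lborel. U s \<omega>) \<le> (LINT s:{a<..b}|lborel. u0)"
    using adm_bnd[OF assms(1) _ assms(2)] assms
    by (intro set_integral_mono adm_set_integrable[OF assms(1,2)]) (auto simp: set_integrable_def intro!: integrable_real_mult_indicator)
  moreover have "(LINT s:{a<..b}|lborel. u0) = u0 * (b - a)"
    using assms by (subst set_integral_const) auto
  ultimately show ?thesis by auto
qed

lemma I_cont: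
  assumes "U \<in> admissible M W u0" "\<omega> \<in> space M" "u0 > 0"
  shows "continuous_on {0..} (\<lambda>t. LINT s:{0..t}|lborel. U s \<omega>)"
proof (rule lipschitz_on_continuous_on)
  show "lipschitz_on u0 {0..} (\<lambda>t. LINT s:{0..t}|lborel. U s \<omega>)"
  proof (rule lipschitz_onI)
    fix x y :: real assume "x \<in> {0..}" "y \<in> {0..}"
    then show "dist (LINT s:{0..x}|lborel. U s \<omega>) (LINT s:{0..y}|lborel. U s \<omega>) \<le> u0 * dist x y"
      using I_lip[OF assms(1,2), of x y] I_lip[OF assms(1,2), of y x]
      by (cases "x \<le> y") (auto simp: dist_real_def abs_minus_commute)
  qed (use assms in auto)
qed

lemma bm_props:
  assumes "is_standard_BM M W"
  shows "prob_space M" "\<And>t. 0 \<le> t \<Longrightarrow> W t \<in> borel_measurable M"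
    "\<And>\<omega>. \<omega> \<in> space M \<Longrightarrow> continuous_on {0..} (\<lambda>t. W t \<omega>)"
  using assms unfolding is_standard_BM_def by auto

lemma W_joint:
  assumes "is_standard_BM M W"
  shows "(\<lambda>p. W (max 0 (fst p)) (snd p)) \<in> borel_measurable (lborel \<Otimes>\<^sub>M M)"
  by (rule caratheodory_meas) (use bm_props[OF assms] in auto)

lemma I_joint:
  assumes "U \<in> admissible M W u0"
  shows "(\<lambda>p. LINT s:{0..max 0 (fst p)}|lborel. U s (snd p)) \<in> borel_measurable (lborel \<Otimes>\<^sub>M M)"
  unfolding set_lebesgue_integral_def
proof (rule lborel.borel_measurable_lebesgue_integral[where f="\<lambda>p s. indicator {0..max 0 (fst p)} s *\<^sub>R U s (snd p)"])
  have [measurable]: "(\<lambda>p. U (fst p) (snd p)) \<in> borel_measurable (lborel \<Otimes>\<^sub>M M)"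
    by (rule adm_meas[OF assms])
  have "(\<lambda>x. (\<lambda>p. U (fst p) (snd p)) (snd x, snd (fst x))) \<in> borel_measurable ((lborel \<Otimes>\<^sub>M M) \<Otimes>\<^sub>M lborel)"
    by measurable
  then have [measurable]: "(\<lambda>x. U (snd x) (snd (fst x))) \<in> borel_measurable ((lborel \<Otimes>\<^sub>M M) \<Otimes>\<^sub>M lborel)"
    by simp
  have eq: "(\<lambda>x. indicator {0..max 0 (fst (fst x))} (snd x) *\<^sub>R U (snd x) (snd (fst x)))
     = (\<lambda>x. (if 0 \<le> snd x \<and> snd x \<le> max 0 (fst (fst x)) then 1 else 0) * U (snd x) (snd (fst x)))"
    by (auto simp: indicator_def fun_eq_iff)
  show "(\<lambda>(p, s). indicator {0..max 0 (fst p)} s *\<^sub>R U s (snd p)) \<in> borel_measurable ((lborel \<Otimes>\<^sub>M M) \<Otimes>\<^sub>M lborel)"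
    unfolding split_beta' eq by measurable
qed

lemma surplus_cont:
  assumes "is_standard_BM M W" "U \<in> admissible M W u0" "\<omega> \<in> space M" "u0 > 0"
  shows "continuous_on {0..} (\<lambda>t. surplus \<mu> \<sigma> W U t \<omega>)"
  unfolding surplus_def
  using bm_props(3)[OF assms(1,3)] I_cont[OF assms(2,3,4)]
  by (intro continuous_intros) auto

lemma surplus_joint:
  assumes "is_standard_BM M W" "U \<in> admissible M W u0"
  shows "(\<lambda>p. surplus \<mu> \<sigma> W U (max 0 (fst p)) (snd p)) \<in> borel_measurable (lborel \<Otimes>\<^sub>M M)"
  unfolding surplus_def
  using W_joint[OF assms(1)] I_joint[OF assms(2)] by measurable

lemma runmax_joint:
  assumes "is_standard_BM M W" "U \<in> admissible M W u0" "u0 > 0"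
  shows "(\<lambda>p. run_max \<mu> \<sigma> W U z (max 0 (fst p)) (snd p)) \<in> borel_measurable (lborel \<Otimes>\<^sub>M M)"
proof -
  let ?X = "\<lambda>t \<omega>. surplus \<mu> \<sigma> W U t \<omega>"
  have [measurable]: "(\<lambda>p. ?X (max 0 (fst p)) (snd p)) \<in> borel_measurable (lborel \<Otimes>\<^sub>M M)"
    by (rule surplus_joint[OF assms(1,2)])
  have cT: "continuous_on {0..T} (\<lambda>t. ?X t \<omega>)" if "\<omega> \<in> space M" for T \<omega>
    by (rule continuous_on_subset[OF surplus_cont[OF assms(1,2) that assms(3)]]) auto
  have eq: "run_max \<mu> \<sigma> W U z (max 0 (fst p)) (snd p) =
     max z (SUP q\<in>\<rat> \<inter> {0..}. ?X (max 0 (min q (max 0 (fst p)))) (snd p))"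
    if "p \<in> space (lborel \<Otimes>\<^sub>M M)" for p
  proof -
    have sp: "snd p \<in> space M" using that by (auto simp: space_pair_measure)
    have "(SUP q\<in>\<rat> \<inter> {0..}. ?X (max 0 (min q (max 0 (fst p)))) (snd p))
        = (SUP q\<in>\<rat> \<inter> {0..}. ?X (min q (max 0 (fst p))) (snd p))"
      by (intro SUP_cong) auto
    then show ?thesis
      unfolding run_max_def using sup_rat(2)[OF cT[OF sp], of "max 0 (fst p)"] by simp
  qed
  show ?thesis
  proof (subst measurable_cong[OF eq], assumption)
    show "(\<lambda>p. max z (SUP q\<in>\<rat> \<inter> {0..}. ?X (max 0 (min q (max 0 (fst p)))) (snd p)))
       \<in> borel_measurable (lborel \<Otimes>\<^sub>M M)"
    proof (intro borel_measurable_max borel_measurable_const borel_measurable_cSUP)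
      show "countable (\<rat> \<inter> {0..} :: real set)" by (intro countable_Int1 countable_rat)
      fix q :: real
      have "(\<lambda>p. (\<lambda>p. ?X (max 0 (fst p)) (snd p)) (min q (max 0 (fst p)), snd p)) \<in> borel_measurable (lborel \<Otimes>\<^sub>M M)"
        by measurable
      then show "(\<lambda>p. ?X (max 0 (min q (max 0 (fst p)))) (snd p)) \<in> borel_measurable (lborel \<Otimes>\<^sub>M M)"
        by simp
    next
      fix p :: "real \<times> 'a" assume "p \<in> space (lborel \<Otimes>\<^sub>M M)"
      then have sp: "snd p \<in> space M" by (auto simp: space_pair_measure)
      show "bdd_above ((\<lambda>q. ?X (max 0 (min q (max 0 (fst p)))) (snd p)) ` (\<rat> \<inter> {0..}))"
        by (rule bdd_above_mono[OF sup_rat(1)[OF cT[OF sp], of "max 0 (fst p)"]]) auto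
    qed
  qed
qed

lemma dd_joint:
  assumes "is_standard_BM M W" "U \<in> admissible M W u0" "u0 > 0"
  shows "(\<lambda>p. drawdown \<mu> \<sigma> W U z (max 0 (fst p)) (snd p)) \<in> borel_measurable (lborel \<Otimes>\<^sub>M M)"
  unfolding drawdown_def
  using runmax_joint[OF assms, of \<mu> \<sigma> z] surplus_joint[OF assms(1,2), of \<mu> \<sigma>] by measurable



lemma exp_set:
  fixes r :: real assumes "r > 0"
  shows "set_integrable lborel {0..} (\<lambda>t. exp (- r * t))"
    "(LINT t:{0..}|lborel. exp (- r * t)) = 1 / r"
  using exp_hbi[OF assms]
  by (auto simp: set_integrable_def set_lebesgue_integral_def has_bochner_integral_iff)

lemma disc_bound:
  fixes r c :: real and h :: "real \<Rightarrow> real"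
  assumes r: "r > 0" and h: "(\<lambda>t. h (max 0 t)) \<in> borel_measurable lborel" and b: "\<And>t. 0 \<le> t \<Longrightarrow> 0 \<le> h t \<and> h t \<le> c"
  shows "set_integrable lborel {0..} (\<lambda>t. exp (- r * t) * h t)"
    "0 \<le> (LINT t:{0..}|lborel. exp (- r * t) * h t)"
    "(LINT t:{0..}|lborel. exp (- r * t) * h t) \<le> c / r"
proof -
  have ic: "set_integrable lborel {0..} (\<lambda>t. c * exp (- r * t))"
    using exp_set(1)[OF r] by (rule set_integrable_mult_right)
  show si: "set_integrable lborel {0..} (\<lambda>t. exp (- r * t) * h t)"
  proof (rule set_integrable_bound[OF ic])
    show "set_borel_measurable lborel {0..} (\<lambda>t. exp (- r * t) * h t)"
    proof -
      have [measurable]: "(\<lambda>t. h (max 0 t)) \<in> borel_measurable lborel" by (rule h)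
      have "(\<lambda>t. indicator {0..} t *\<^sub>R (exp (- r * t) * h t)) = (\<lambda>t. indicator {0..} t *\<^sub>R (exp (- r * t) * h (max 0 t)))"
        by (auto simp: fun_eq_iff indicator_def)
      then show ?thesis unfolding set_borel_measurable_def by simp
    qed
    show "AE x in lborel. x \<in> {0..} \<longrightarrow> norm (exp (- r * x) * h x) \<le> norm (c * exp (- r * x))"
    proof (rule AE_I2, intro impI)
      fix x :: real assume "x \<in> {0..}"
      then have hx: "0 \<le> h x" "h x \<le> c" using b by auto
      have "norm (exp (- r * x) * h x) = exp (- r * x) * h x" using hx by (simp add: abs_mult)
      also have "\<dots> \<le> exp (- r * x) * c" using hx by (intro mult_left_mono) auto
      also have "\<dots> \<le> norm (c * exp (- r * x))" by (simp add: abs_mult)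
      finally show "norm (exp (- r * x) * h x) \<le> norm (c * exp (- r * x))" .
    qed
  qed
  show "0 \<le> (LINT t:{0..}|lborel. exp (- r * t) * h t)"
    unfolding set_lebesgue_integral_def
    by (rule Bochner_Integration.integral_nonneg) (use b in \<open>auto simp: indicator_def\<close>)
  have "(LINT t:{0..}|lborel. exp (- r * t) * h t) \<le> (LINT t:{0..}|lborel. c * exp (- r * t))"
  proof (intro set_integral_mono si ic)
    fix t :: real assume "t \<in> {0..}"
    then have "exp (- r * t) * h t \<le> exp (- r * t) * c" using b by (intro mult_left_mono) auto
    then show "exp (- r * t) * h t \<le> c * exp (- r * t)" by (simp add: mult.commute)
  qed
  also have "\<dots> = c * (1 / r)"
    using exp_set[OF r] by (simp add: set_integral_mult_right)
  finally show "(LINT t:{0..}|lborel. exp (- r * t) * h t) \<le> c / r" by simp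
qed

lemma param_meas:
  fixes g :: "real \<Rightarrow> 'a \<Rightarrow> real"
  assumes "(\<lambda>p. g (fst p) (snd p)) \<in> borel_measurable (lborel \<Otimes>\<^sub>M M)"
  shows "(\<lambda>\<omega>. LINT t:{0..}|lborel. exp (- r * t) * g t \<omega>) \<in> borel_measurable M"
  unfolding set_lebesgue_integral_def
proof (rule lborel.borel_measurable_lebesgue_integral[where f="\<lambda>\<omega> t. indicator {0..} t *\<^sub>R (exp (- r * t) * g t \<omega>)"])
  have [measurable]: "(\<lambda>p. g (fst p) (snd p)) \<in> borel_measurable (lborel \<Otimes>\<^sub>M M)" by fact
  have "(\<lambda>x. (\<lambda>p. g (fst p) (snd p)) (snd x, fst x)) \<in> borel_measurable (M \<Otimes>\<^sub>M lborel)"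
    by measurable
  then have [measurable]: "(\<lambda>x. g (snd x) (fst x)) \<in> borel_measurable (M \<Otimes>\<^sub>M lborel)"
    by simp
  show "(\<lambda>(\<omega>, t). indicator {0..} t *\<^sub>R (exp (- r * t) * g t \<omega>)) \<in> borel_measurable (M \<Otimes>\<^sub>M lborel)"
    unfolding split_beta' by measurable
qed

lemma param_meas':
  fixes g :: "real \<Rightarrow> 'a \<Rightarrow> real"
  assumes "(\<lambda>p. g (max 0 (fst p)) (snd p)) \<in> borel_measurable (lborel \<Otimes>\<^sub>M M)"
  shows "(\<lambda>\<omega>. LINT t:{0..}|lborel. exp (- r * t) * g t \<omega>) \<in> borel_measurable M"
proof -
  have "(\<lambda>\<omega>. LINT t:{0..}|lborel. exp (- r * t) * g (max 0 t) \<omega>) \<in> borel_measurable M"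
    using param_meas[of "\<lambda>t. g (max 0 t)"] assms by simp
  moreover have "(LINT t:{0..}|lborel. exp (- r * t) * g (max 0 t) \<omega>) = (LINT t:{0..}|lborel. exp (- r * t) * g t \<omega>)" for \<omega>
    by (rule set_lebesgue_integral_cong) auto
  ultimately show ?thesis by simp
qed



lemma slice_meas:
  assumes "(\<lambda>p. g (max 0 (fst p)) (snd p)) \<in> borel_measurable (lborel \<Otimes>\<^sub>M M)" "\<omega> \<in> space M"
  shows "(\<lambda>t. g (max 0 t) \<omega>) \<in> borel_measurable lborel"
  using measurable_comp[OF measurable_Pair2'[OF assms(2)] assms(1)]
  by (simp add: comp_def)

lemma const_adm:
  assumes "u0 > (0::real)"
  shows "(\<lambda>t \<omega>. u0) \<in> admissible M W u0"
proof -
  have "A \<in> aug_filtration M W t" if "A = {} \<or> A = space M" for A t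
  proof -
    have "A \<in> nat_filtration M W t"
      using that unfolding nat_filtration_def
      by (auto intro: sigma_sets.Empty sigma_sets_top)
    moreover have "{} \<in> null_sets M" by simp
    ultimately show ?thesis unfolding aug_filtration_def by blast
  qed
  then show ?thesis unfolding admissible_def using assms by auto
qed

lemma ind_bound:
  assumes "U \<in> admissible M W u0" "\<omega> \<in> space M" "0 \<le> t"
  shows "1 - (if z - d \<le> \<mu> * t + \<sigma> * W (max 0 t) \<omega> then 1 else 0)
       \<le> (if d < drawdown \<mu> \<sigma> W U z t \<omega> then 1 else (0::real))"
proof (cases "z - d \<le> \<mu> * t + \<sigma> * W (max 0 t) \<omega>")
  case False
  have "surplus \<mu> \<sigma> W U t \<omega> \<le> \<mu> * t + \<sigma> * W t \<omega>"
    unfolding surplus_def using I_nonneg[OF assms(1,2)] by auto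
  moreover have "z \<le> run_max \<mu> \<sigma> W U z t \<omega>" unfolding run_max_def by simp
  ultimately have "d < drawdown \<mu> \<sigma> W U z t \<omega>"
    using False assms(3) unfolding drawdown_def by auto
  then show ?thesis by simp
qed simp

lemma dd_mono:
  assumes "z1 \<le> z2"
  shows "drawdown \<mu> \<sigma> W U z1 t \<omega> \<le> drawdown \<mu> \<sigma> W U z2 t \<omega>"
  using assms unfolding drawdown_def run_max_def by auto


theorem lemma1p1:
  fixes M :: "'a measure" and W :: "real \<Rightarrow> 'a \<Rightarrow> real"
    and \<mu> \<sigma> u0 r \<beta> d :: real
  assumes "complete_measure M"
    and "is_standard_BM M W"
    and "\<sigma> > 0" and "u0 > 0" and "r > 0" and "\<beta> > 0" and "d > 0"
  shows "(\<forall>z1 z2. 0 \<le> z1 \<and> z1 \<le> z2 \<longrightarrow>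
            value_fun M W \<mu> \<sigma> u0 r \<beta> d z2 \<le> value_fun M W \<mu> \<sigma> u0 r \<beta> d z1)
       \<and> (\<forall>z\<ge>0. (\<beta> * u0 - 1) / r \<le> value_fun M W \<mu> \<sigma> u0 r \<beta> d z
               \<and> value_fun M W \<mu> \<sigma> u0 r \<beta> d z \<le> \<beta> * u0 / r)
       \<and> ((\<lambda>z. value_fun M W \<mu> \<sigma> u0 r \<beta> d z) \<longlongrightarrow> (\<beta> * u0 - 1) / r) at_top"
proof -
  note bm = bm_props[OF assms(2)]
  interpret P: prob_space M by (rule bm(1))
  have r: "r > 0" and u0: "u0 > 0" and \<beta>: "\<beta> > 0" using assms by auto
  define A where "A U \<omega> = (LINT t:{0..}|lborel. exp (- r * t) * U t \<omega>)" for U :: "real \<Rightarrow> 'a \<Rightarrow> real" and \<omega>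
  define B where "B U z \<omega> = (LINT t:{0..}|lborel. exp (- r * t) * (if d < drawdown \<mu> \<sigma> W U z t \<omega> then 1 else (0::real)))"
    for U :: "real \<Rightarrow> 'a \<Rightarrow> real" and z \<omega>
  define H where "H z \<omega> = (LINT t:{0..}|lborel. exp (- r * t) * (if z - d \<le> \<mu> * t + \<sigma> * W (max 0 t) \<omega> then 1 else (0::real)))"
    for z \<omega>
  define Ad where "Ad = admissible M W u0"
  define pf where "pf U z = perf M W \<mu> \<sigma> r \<beta> d U z" for U z
  have pf_eq: "pf U z = (\<integral>\<omega>. \<beta> * A U \<omega> - B U z \<omega> \<partial>M)" for U z
    unfolding pf_def perf_def A_def B_def by simp
  have vf: "value_fun M W \<mu> \<sigma> u0 r \<beta> d z = (SUP U\<in>Ad. pf U z)" for z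
    unfolding value_fun_def Ad_def pf_def ..

  have [measurable]: "(\<lambda>p. W (max 0 (fst p)) (snd p)) \<in> borel_measurable (lborel \<Otimes>\<^sub>M M)"
    by (rule W_joint[OF assms(2)])
  have Hj: "(\<lambda>p. (\<lambda>t \<omega>. if z - d \<le> \<mu> * t + \<sigma> * W (max 0 t) \<omega> then 1 else (0::real)) (max 0 (fst p)) (snd p))
      \<in> borel_measurable (lborel \<Otimes>\<^sub>M M)" for z
    by simp measurable
  have Bj: "(\<lambda>p. (\<lambda>t \<omega>. if d < drawdown \<mu> \<sigma> W U z t \<omega> then 1 else (0::real)) (max 0 (fst p)) (snd p))
      \<in> borel_measurable (lborel \<Otimes>\<^sub>M M)" if "U \<in> Ad" for U z
  proof -
    have [measurable]: "(\<lambda>p. drawdown \<mu> \<sigma> W U z (max 0 (fst p)) (snd p)) \<in> borel_measurable (lborel \<Otimes>\<^sub>M M)"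
      using dd_joint[OF assms(2) _ u0] that unfolding Ad_def by blast
    show ?thesis by simp measurable
  qed
  have Uj: "(\<lambda>p. U (max 0 (fst p)) (snd p)) \<in> borel_measurable (lborel \<Otimes>\<^sub>M M)" if "U \<in> Ad" for U
  proof -
    have [measurable]: "(\<lambda>p. U (fst p) (snd p)) \<in> borel_measurable (lborel \<Otimes>\<^sub>M M)"
      using adm_meas that unfolding Ad_def by blast
    have "(\<lambda>p. (\<lambda>p. U (fst p) (snd p)) (max 0 (fst p), snd p)) \<in> borel_measurable (lborel \<Otimes>\<^sub>M M)"
      by measurable
    then show ?thesis by simp
  qed

  have A_meas: "A U \<in> borel_measurable M" if "U \<in> Ad" for U
    unfolding A_def by (rule param_meas'[OF Uj[OF that]])
  have B_meas: "B U z \<in> borel_measurable M" if "U \<in> Ad" for U z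
    unfolding B_def by (rule param_meas'[OF Bj[OF that]])
  have H_meas: "H z \<in> borel_measurable M" for z
    unfolding H_def by (rule param_meas'[OF Hj])

  have A_b: "set_integrable lborel {0..} (\<lambda>t. exp (- r * t) * U t \<omega>) \<and> 0 \<le> A U \<omega> \<and> A U \<omega> \<le> u0 / r"
    if "U \<in> Ad" "\<omega> \<in> space M" for U \<omega>
    unfolding A_def using disc_bound[OF r slice_meas[OF Uj[OF that(1)] that(2)], where c=u0]
      adm_bnd[of U M W u0 _ \<omega>] that unfolding Ad_def by auto
  have B_b: "set_integrable lborel {0..} (\<lambda>t. exp (- r * t) * (if d < drawdown \<mu> \<sigma> W U z t \<omega> then 1 else (0::real)))
      \<and> 0 \<le> B U z \<omega> \<and> B U z \<omega> \<le> 1 / r"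
    if "U \<in> Ad" "\<omega> \<in> space M" for U z \<omega>
    unfolding B_def using disc_bound[OF r slice_meas[OF Bj[OF that(1), of z] that(2)], where c=1] by auto
  have H_b: "set_integrable lborel {0..} (\<lambda>t. exp (- r * t) * (if z - d \<le> \<mu> * t + \<sigma> * W (max 0 t) \<omega> then 1 else (0::real)))
      \<and> 0 \<le> H z \<omega> \<and> H z \<omega> \<le> 1 / r"
    if "\<omega> \<in> space M" for z \<omega>
    unfolding H_def using disc_bound[OF r slice_meas[OF Hj[of z] that], where c=1] by auto

  have F_int: "integrable M (\<lambda>\<omega>. \<beta> * A U \<omega> - B U z \<omega>)" if "U \<in> Ad" for U z
  proof (rule P.integrable_const_bound[where B="\<beta> * (u0 / r) + 1 / r"])
    show "AE x in M. norm (\<beta> * A U x - B U z x) \<le> \<beta> * (u0 / r) + 1 / r"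
    proof (rule AE_I2)
      fix x assume x: "x \<in> space M"
      have a0: "0 \<le> \<beta> * A U x" using A_b[OF that x] \<beta> by simp
      have a1: "\<beta> * A U x \<le> \<beta> * (u0 / r)"
        by (rule mult_left_mono) (use A_b[OF that x] \<beta> in auto)
      show "norm (\<beta> * A U x - B U z x) \<le> \<beta> * (u0 / r) + 1 / r"
        using a0 a1 B_b[OF that x, of z] by auto
    qed
    show "(\<lambda>\<omega>. \<beta> * A U \<omega> - B U z \<omega>) \<in> borel_measurable M"
      using A_meas[OF that] B_meas[OF that] by measurable
  qed
  have H_int: "integrable M (H z)" for z
    by (rule P.integrable_const_bound[where B="1/r"]) (use H_b H_meas in auto)

  have ne: "Ad \<noteq> {}" using const_adm[OF u0] unfolding Ad_def by blast
  have pf_le: "pf U z \<le> \<beta> * u0 / r" if "U \<in> Ad" for U z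
  proof -
    have "pf U z \<le> (\<integral>\<omega>. \<beta> * u0 / r \<partial>M)"
      unfolding pf_eq
    proof (rule integral_mono[OF F_int[OF that]])
      fix x assume x: "x \<in> space M"
      have "\<beta> * A U x \<le> \<beta> * (u0 / r)" by (rule mult_left_mono) (use A_b[OF that x] \<beta> in auto)
      then show "\<beta> * A U x - B U z x \<le> \<beta> * u0 / r" using B_b[OF that x, of z] by auto
    qed simp
    then show ?thesis using P.prob_space by simp
  qed
  have bdd: "bdd_above ((\<lambda>U. pf U z) ` Ad)" for z
    using pf_le by (intro bdd_aboveI) auto
  have v_le: "(SUP U\<in>Ad. pf U z) \<le> \<beta> * u0 / r" for z
    using ne pf_le by (intro cSUP_least) auto

  have pf_mono: "pf U z2 \<le> pf U z1" if "U \<in> Ad" "z1 \<le> z2" for U z1 z2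
    unfolding pf_eq
  proof (rule integral_mono[OF F_int[OF that(1)] F_int[OF that(1)]])
    fix \<omega> assume \<omega>: "\<omega> \<in> space M"
    have "B U z1 \<omega> \<le> B U z2 \<omega>"
      unfolding B_def
      using B_b[OF that(1) \<omega>, of z1] B_b[OF that(1) \<omega>, of z2] dd_mono[OF that(2), of \<mu> \<sigma> W U _ \<omega>]
      by (intro set_integral_mono) (auto intro: less_le_trans)
    then show "\<beta> * A U \<omega> - B U z2 \<omega> \<le> \<beta> * A U \<omega> - B U z1 \<omega>" by simp
  qed

  let ?L = "(\<beta> * u0 - 1) / r"
  have U0: "(\<lambda>t \<omega>. u0) \<in> Ad" unfolding Ad_def by (rule const_adm[OF u0])
  have pf0: "?L \<le> pf (\<lambda>t \<omega>. u0) z" for z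
  proof -
    have "(\<integral>\<omega>. ?L \<partial>M) \<le> pf (\<lambda>t \<omega>. u0) z"
      unfolding pf_eq
    proof (rule integral_mono[OF _ F_int[OF U0]])
      fix x assume x: "x \<in> space M"
      have "A (\<lambda>t \<omega>. u0) x = u0 / r"
        unfolding A_def using exp_set[OF r] by simp
      then show "?L \<le> \<beta> * A (\<lambda>t \<omega>. u0) x - B (\<lambda>t \<omega>. u0) z x"
        using B_b[OF U0 x, of z] by (auto simp: diff_divide_distrib)
    qed simp
    then show ?thesis using P.prob_space by simp
  qed
  have v_ge: "?L \<le> (SUP U\<in>Ad. pf U z)" for z
    using pf0[of z] cSUP_upper[OF U0 bdd[of z]] by linarith

  have pf_H: "pf U z \<le> ?L + (\<integral>\<omega>. H z \<omega> \<partial>M)" if "U \<in> Ad" for U z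
  proof -
    have "pf U z \<le> (\<integral>\<omega>. ?L + H z \<omega> \<partial>M)"
      unfolding pf_eq
    proof (rule integral_mono[OF F_int[OF that]])
      show "integrable M (\<lambda>\<omega>. ?L + H z \<omega>)" using H_int by simp
      fix \<omega> assume \<omega>: "\<omega> \<in> space M"
      let ?e = "\<lambda>t. exp (- r * t)"
      let ?iW = "\<lambda>t. if z - d \<le> \<mu> * t + \<sigma> * W (max 0 t) \<omega> then 1 else (0::real)"
      let ?iD = "\<lambda>t. if d < drawdown \<mu> \<sigma> W U z t \<omega> then 1 else (0::real)"
      have "(LINT t:{0..}|lborel. ?e t - ?e t * ?iW t) \<le> (LINT t:{0..}|lborel. ?e t * ?iD t)"
      proof (rule set_integral_mono)
        show "set_integrable lborel {0..} (\<lambda>t. ?e t - ?e t * ?iW t)"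
          using exp_set(1)[OF r] H_b[OF \<omega>, of z] by (intro set_integral_diff(1)) auto
        show "set_integrable lborel {0..} (\<lambda>t. ?e t * ?iD t)"
          using B_b[OF that \<omega>, of z] by blast
        fix t :: real assume "t \<in> {0..}"
        then have "1 - ?iW t \<le> ?iD t" using ind_bound[of U M W u0 \<omega> t z d \<mu> \<sigma>] that \<omega> unfolding Ad_def by auto
        then have "?e t * (1 - ?iW t) \<le> ?e t * ?iD t" by (intro mult_left_mono) auto
        then show "?e t - ?e t * ?iW t \<le> ?e t * ?iD t" by (simp add: right_diff_distrib)
      qed
      moreover have "(LINT t:{0..}|lborel. ?e t - ?e t * ?iW t) = 1 / r - H z \<omega>"
        unfolding H_def using exp_set[OF r] H_b[OF \<omega>, of z] by (subst set_integral_diff(2)) auto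
      ultimately have "1 / r - H z \<omega> \<le> B U z \<omega>" unfolding B_def by simp
      moreover have "\<beta> * A U \<omega> \<le> \<beta> * (u0 / r)" by (rule mult_left_mono) (use A_b[OF that \<omega>] \<beta> in auto)
      ultimately show "\<beta> * A U \<omega> - B U z \<omega> \<le> ?L + H z \<omega>" by (auto simp: diff_divide_distrib)
    qed
    also have "\<dots> = ?L + (\<integral>\<omega>. H z \<omega> \<partial>M)"
      using H_int P.prob_space by simp
    finally show ?thesis .
  qed
  have v_H: "(SUP U\<in>Ad. pf U z) \<le> ?L + (\<integral>\<omega>. H z \<omega> \<partial>M)" for z
    using ne pf_H by (intro cSUP_least) auto

  have H_lim: "((\<lambda>z. \<integral>\<omega>. H z \<omega> \<partial>M) \<longlongrightarrow> 0) at_top"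
  proof -
    have "((\<lambda>z. \<integral>\<omega>. H z \<omega> \<partial>M) \<longlongrightarrow> (\<integral>\<omega>. 0 \<partial>M)) at_top"
    proof (rule integral_dominated_convergence_at_top[where w="\<lambda>_. 1 / r"])
      show "integrable M (\<lambda>_. 1 / r)" by simp
      show "\<And>z. H z \<in> borel_measurable M" by (rule H_meas)
      show "\<forall>\<^sub>F z in at_top. AE x in M. norm (H z x) \<le> 1 / r"
        using H_b by (intro always_eventually allI AE_I2) auto
      show "AE x in M. ((\<lambda>z. H z x) \<longlongrightarrow> 0) at_top"
      proof (rule AE_I2)
        fix \<omega> assume \<omega>: "\<omega> \<in> space M"
        let ?s = "\<lambda>z t. indicator {0..} t *\<^sub>R (exp (- r * t) * (if z - d \<le> \<mu> * t + \<sigma> * W (max 0 t) \<omega> then 1 else (0::real)))"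
        have Wm[measurable]: "(\<lambda>t. W (max 0 t) \<omega>) \<in> borel_measurable lborel"
          using slice_meas[of "\<lambda>t \<omega>. W t \<omega>", OF _ \<omega>] W_joint[OF assms(2)] by simp
        have "((\<lambda>z. integral\<^sup>L lborel (?s z)) \<longlongrightarrow> integral\<^sup>L lborel (\<lambda>t::real. 0::real)) at_top"
        proof (rule integral_dominated_convergence_at_top[where w="\<lambda>t. indicator {0..} t * exp (- r * t)" and s="?s" and f="\<lambda>t. 0" and M=lborel])
          show "integrable lborel (\<lambda>t. indicator {0..} t * exp (- r * t))"
            using exp_hbi[OF r] by (auto simp: has_bochner_integral_iff)
          show "\<And>z. ?s z \<in> borel_measurable lborel" by measurable
          show "\<forall>\<^sub>F z in at_top. AE t in lborel. norm (?s z t) \<le> indicator {0..} t * exp (- r * t)"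
            by (intro always_eventually allI AE_I2) (auto simp: indicator_def)
          show "AE t in lborel. ((\<lambda>z. ?s z t) \<longlongrightarrow> 0) at_top"
          proof (rule AE_I2)
            fix t :: real
            have "\<forall>\<^sub>F z in at_top. \<mu> * t + \<sigma> * W (max 0 t) \<omega> + d < z"
              by (rule eventually_gt_at_top)
            then have "\<forall>\<^sub>F z in at_top. ?s z t = 0"
              by eventually_elim auto
            then show "((\<lambda>z. ?s z t) \<longlongrightarrow> 0) at_top" by (rule tendsto_eventually)
          qed
        qed simp
        then show "((\<lambda>z. H z \<omega>) \<longlongrightarrow> 0) at_top"
          unfolding H_def set_lebesgue_integral_def by simp
      qed
    qed simp
    then show ?thesis by simp
  qed

  show ?thesis
    unfolding vf
  proof (intro conjI allI impI)
    fix z1 z2 :: real assume "0 \<le> z1 \<and> z1 \<le> z2"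
    then show "(SUP U\<in>Ad. pf U z2) \<le> (SUP U\<in>Ad. pf U z1)"
    proof (intro cSUP_least ne)
      fix U assume U: "U \<in> Ad"
      have "pf U z2 \<le> pf U z1" using pf_mono[OF U] \<open>0 \<le> z1 \<and> z1 \<le> z2\<close> by blast
      also have "\<dots> \<le> (SUP U\<in>Ad. pf U z1)" by (rule cSUP_upper[OF U bdd])
      finally show "pf U z2 \<le> (SUP U\<in>Ad. pf U z1)" .
    qed
  next
    fix z :: real
    show "?L \<le> (SUP U\<in>Ad. pf U z)" by (rule v_ge)
    show "(SUP U\<in>Ad. pf U z) \<le> \<beta> * u0 / r" by (rule v_le)
  next
    show "((\<lambda>z. SUP U\<in>Ad. pf U z) \<longlongrightarrow> ?L) at_top"
    proof (rule tendsto_sandwich[of "\<lambda>_. ?L" _ _ "\<lambda>z. ?L + (\<integral>\<omega>. H z \<omega> \<partial>M)"])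
      show "\<forall>\<^sub>F z in at_top. ?L \<le> (SUP U\<in>Ad. pf U z)" using v_ge by (intro always_eventually) auto
      show "\<forall>\<^sub>F z in at_top. (SUP U\<in>Ad. pf U z) \<le> ?L + (\<integral>\<omega>. H z \<omega> \<partial>M)"
        using v_H by (intro always_eventually) auto
      show "((\<lambda>z. ?L + (\<integral>\<omega>. H z \<omega> \<partial>M)) \<longlongrightarrow> ?L) at_top"
        using tendsto_add[OF tendsto_const H_lim] by simp
    qed simp
  qed
qed

end
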